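(* A permutation group $G$ on a finite set $\Omega$ with $|\Omega|\ge 2$ has the ordered $2$-ut property if and only if $G$ is primitive.
   Context: $G$ has the ordered $k$-ut property if for every $k$-tuple $(a_1,\dots,a_k)$ of distinct points of $\Omega$ and every ordered partition $(P_1,\dots,P_k)$ of $\Omega$ into $k$ nonempty parts there is $g\in G$ with $a_ig\in P_i$ for all $i$. *)

theory Defs
  imports "HOL-Combinatorics.Permutations"
begin

text \<open>Points are acted on by function application: a g is written g a.\<close>

definition perm_group_on :: "'a set \<Rightarrow> ('a \<Rightarrow> 'a) set \<Rightarrow> bool" where
  "perm_group_on \<Omega> G \<longleftrightarrow>
     (\<forall>g\<in>G. g permutes \<Omega>) \<and> id \<in> G \<and>
     (\<forall>g\<in>G. \<forall>h\<in>G. g \<circ> h \<in> G) \<and> (\<forall>g\<in>G. inv g \<in> G)"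

definition transitive_on :: "'a set \<Rightarrow> ('a \<Rightarrow> 'a) set \<Rightarrow> bool" where
  "transitive_on \<Omega> G \<longleftrightarrow> \<Omega> \<noteq> {} \<and> (\<forall>x\<in>\<Omega>. \<forall>y\<in>\<Omega>. \<exists>g\<in>G. g x = y)"

definition is_block :: "'a set \<Rightarrow> ('a \<Rightarrow> 'a) set \<Rightarrow> 'a set \<Rightarrow> bool" where
  "is_block \<Omega> G B \<longleftrightarrow> B \<noteq> {} \<and> B \<subseteq> \<Omega> \<and> (\<forall>g\<in>G. g ` B = B \<or> g ` B \<inter> B = {})"

definition primitive_on :: "'a set \<Rightarrow> ('a \<Rightarrow> 'a) set \<Rightarrow> bool" where
  "primitive_on \<Omega> G \<longleftrightarrow> transitive_on \<Omega> G \<and>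
     (\<forall>B. is_block \<Omega> G B \<longrightarrow> card B = 1 \<or> B = \<Omega>)"

text \<open>Ordered partition (P_1,...,P_k) of \<Omega> into k nonempty parts, indexed by 0..k-1.\<close>
definition ordered_partition :: "'a set \<Rightarrow> nat \<Rightarrow> (nat \<Rightarrow> 'a set) \<Rightarrow> bool" where
  "ordered_partition \<Omega> k P \<longleftrightarrow>
     (\<forall>i<k. P i \<noteq> {}) \<and> (\<forall>i<k. \<forall>j<k. i \<noteq> j \<longrightarrow> P i \<inter> P j = {}) \<and>
     (\<Union>i<k. P i) = \<Omega>"

definition ordered_ut :: "nat \<Rightarrow> 'a set \<Rightarrow> ('a \<Rightarrow> 'a) set \<Rightarrow> bool" where
  "ordered_ut k \<Omega> G \<longleftrightarrow>
     (\<forall>a P. a ` {..<k} \<subseteq> \<Omega> \<and> inj_on a {..<k} \<and> ordered_partition \<Omega> k P \<longrightarrow>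
        (\<exists>g\<in>G. \<forall>i<k. g (a i) \<in> P i))"

end

theory Submission
  imports Defs
begin

lemma core:
  assumes fin: "finite \<Omega>" and pg: "perm_group_on \<Omega> G" and pr: "primitive_on \<Omega> G"
    and x0: "x0 \<in> \<Omega>" and x1: "x1 \<in> \<Omega>" and ne: "x0 \<noteq> x1"
    and P0: "P0 \<subseteq> \<Omega>" "P0 \<noteq> {}" "P0 \<noteq> \<Omega>"
    and cl: "\<forall>g\<in>G. g x0 \<in> P0 \<longrightarrow> g x1 \<in> P0"
  shows False
proof -
  have perm: "g permutes \<Omega>" if "g \<in> G" for g using pg that unfolding perm_group_on_def by auto
  have comp: "g \<circ> h \<in> G" if "g \<in> G" "h \<in> G" for g h using pg that unfolding perm_group_on_def by auto
  have idG: "id \<in> G" using pg unfolding perm_group_on_def by auto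
  have tr: "transitive_on \<Omega> G" using pr unfolding primitive_on_def by auto
  have trx: "\<exists>g\<in>G. g x = y" if "x \<in> \<Omega>" "y \<in> \<Omega>" for x y
    using tr that unfolding transitive_on_def by simp
  define E where "E = {(g x0, g x1) | g. g \<in> G}"
  define C where "C = (\<lambda>x. {y. (x,y) \<in> E\<^sup>*})"
  have inO: "g u \<in> \<Omega>" if "g \<in> G" "u \<in> \<Omega>" for g u
    using perm[OF that(1)] that(2) by (simp add: permutes_in_image)
  have Esub: "(u,v) \<in> E \<Longrightarrow> v \<in> \<Omega>" for u v
    unfolding E_def using inO x1 by auto
  have Csub: "C x \<subseteq> \<Omega>" if "x \<in> \<Omega>" for x
  proof
    fix y assume "y \<in> C x"
    hence "(x,y) \<in> E\<^sup>*" by (simp add: C_def)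
    thus "y \<in> \<Omega>" by (induction rule: rtrancl_induct) (use that Esub in auto)
  qed
  have finC: "finite (C x)" if "x \<in> \<Omega>" for x using Csub[OF that] fin finite_subset by blast
  have Einv: "(g u, g v) \<in> E" if "g \<in> G" "(u,v) \<in> E" for g u v
  proof -
    from that(2) obtain h where h: "h \<in> G" "u = h x0" "v = h x1" unfolding E_def by auto
    have "(g u, g v) = ((g \<circ> h) x0, (g \<circ> h) x1)" using h by simp
    thus ?thesis unfolding E_def using comp[OF that(1) h(1)] by blast
  qed
  have Esinv: "(g u, g v) \<in> E\<^sup>*" if "g \<in> G" "(u,v) \<in> E\<^sup>*" for g u v
    using that(2)
  proof (induction rule: rtrancl_induct)
    case base then show ?case by simp
  next
    case (step y z) then show ?case using Einv[OF that(1)] by (meson rtrancl.rtrancl_into_rtrancl)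
  qed
  have img: "g ` C x \<subseteq> C (g x)" if "g \<in> G" for g x
  proof
    fix y assume "y \<in> g ` C x"
    then obtain z where "z \<in> C x" "y = g z" by blast
    thus "y \<in> C (g x)" using Esinv[OF that, of x z] unfolding C_def by simp
  qed
  have injg: "inj g" if "g \<in> G" for g using perm[OF that] permutes_inj by blast
  have cimg: "card (g ` C x) = card (C x)" if "g \<in> G" for g x
    using card_image[OF inj_on_subset[OF injg[OF that] subset_UNIV]] .
  have card_le: "card (C x) \<le> card (C y)" if xy: "x \<in> \<Omega>" "y \<in> \<Omega>" for x y
  proof -
    obtain g where g: "g \<in> G" "g x = y" using trx[OF xy] by blast
    have "card (g ` C x) \<le> card (C y)" using img[OF g(1), of x] g(2) finC[OF that(2)]
      by (simp add: card_mono)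
    thus ?thesis using cimg[OF g(1)] by simp
  qed
  have eqC: "C y = C x" if "x \<in> \<Omega>" "y \<in> C x" for x y
  proof -
    have yO: "y \<in> \<Omega>" using Csub[OF that(1)] that(2) by auto
    have "C y \<subseteq> C x" using that(2) unfolding C_def by (auto intro: rtrancl_trans)
    moreover have "card (C y) = card (C x)" using card_le yO that(1) by (simp add: le_antisym)
    ultimately show ?thesis using finC[OF that(1)] card_subset_eq by blast
  qed
  have selfC: "x \<in> C x" for x unfolding C_def by simp
  have block: "is_block \<Omega> G (C x)" if xO: "x \<in> \<Omega>" for x
    unfolding is_block_def
  proof (intro conjI ballI)
    show "C x \<noteq> {}" using selfC by auto
    show "C x \<subseteq> \<Omega>" using Csub[OF xO] .
    fix g assume g: "g \<in> G"
    have gxO: "g x \<in> \<Omega>" using inO[OF g xO] .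
    have e1: "g ` C x = C (g x)"
    proof (rule card_subset_eq[OF finC[OF gxO] img[OF g, of x]])
      show "card (g ` C x) = card (C (g x))"
        using cimg[OF g, of x] card_le[OF xO gxO] card_le[OF gxO xO] by simp
    qed
    show "g ` C x = C x \<or> g ` C x \<inter> C x = {}"
    proof (cases "g ` C x \<inter> C x = {}")
      case False
      then obtain z where z: "z \<in> C (g x)" "z \<in> C x" using e1 by auto
      have "C z = C (g x)" using eqC[OF gxO z(1)] .
      moreover have "C z = C x" using eqC[OF xO z(2)] .
      ultimately show ?thesis using e1 by simp
    qed simp
  qed
  have "(id x0, id x1) \<in> E" unfolding E_def using idG by blast
  hence "(x0, x1) \<in> E\<^sup>*" by simp
  hence "x1 \<in> C x0" unfolding C_def by simp
  hence "{x0, x1} \<subseteq> C x0" using selfC by auto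
  hence "card {x0, x1} \<le> card (C x0)" using finC[OF x0] by (rule card_mono[rotated])
  hence c2: "2 \<le> card (C x0)" using ne by simp
  obtain x where x: "x \<in> P0" using P0 by auto
  have xO: "x \<in> \<Omega>" using x P0 by auto
  have "2 \<le> card (C x)" using c2 card_le[OF x0 xO] by simp
  moreover have "C x \<subseteq> P0"
  proof
    fix y assume "y \<in> C x"
    hence "(x,y) \<in> E\<^sup>*" by (simp add: C_def)
    thus "y \<in> P0"
    proof (induction rule: rtrancl_induct)
      case base then show ?case using x .
    next
      case (step y z)
      then obtain g where "g \<in> G" "y = g x0" "z = g x1" unfolding E_def by auto
      then show ?case using cl step by auto
    qed
  qed
  ultimately show False using block[OF xO] pr P0 unfolding primitive_on_def by auto
qed

theorem proposition2p2:
  fixes \<Omega> :: "'a set" and G :: "('a \<Rightarrow> 'a) set"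
  assumes "finite \<Omega>" and "card \<Omega> \<ge> 2" and "perm_group_on \<Omega> G"
  shows "ordered_ut 2 \<Omega> G \<longleftrightarrow> primitive_on \<Omega> G"
proof
  assume ut: "ordered_ut 2 \<Omega> G"
  have use: "\<exists>g\<in>G. g x \<in> B \<and> g y \<in> \<Omega> - B"
    if "x \<in> \<Omega>" "y \<in> \<Omega>" "x \<noteq> y" "B \<subseteq> \<Omega>" "B \<noteq> {}" "\<Omega> - B \<noteq> {}" for x y B
  proof -
    define a where "a = (\<lambda>i::nat. if i = 0 then x else y)"
    define P where "P = (\<lambda>i::nat. if i = 0 then B else \<Omega> - B)"
    have l2: "{..<2::nat} = {0,1}" by auto
    have "a ` {..<2} \<subseteq> \<Omega>" "inj_on a {..<2}" using that unfolding a_def l2 by auto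
    moreover have "ordered_partition \<Omega> 2 P"
      unfolding ordered_partition_def P_def using that
      by (auto simp: l2 less_2_cases_iff)
    ultimately obtain g where g: "g \<in> G" "\<forall>i<2. g (a i) \<in> P i"
      using ut unfolding ordered_ut_def by blast
    have "g (a 0) \<in> P 0" "g (a 1) \<in> P 1" using g(2) by auto
    thus ?thesis using g(1) unfolding a_def P_def by auto
  qed
  have ne: "\<exists>y\<in>\<Omega>. y \<noteq> x" for x
  proof (rule ccontr)
    assume "\<not> ?thesis"
    hence "\<Omega> \<subseteq> {x}" by auto
    hence "card \<Omega> \<le> 1" using card_mono[of "{x}" \<Omega>] by auto
    thus False using assms(2) by simp
  qed
  have trans: "transitive_on \<Omega> G"
    unfolding transitive_on_def
  proof (intro conjI ballI)
    show "\<Omega> \<noteq> {}" using assms(2) by auto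
    fix x y assume xy: "x \<in> \<Omega>" "y \<in> \<Omega>"
    show "\<exists>g\<in>G. g x = y"
    proof (cases "x = y")
      case True then show ?thesis using assms(3) unfolding perm_group_on_def by (metis id_apply)
    next
      case False
      obtain z where z: "z \<in> \<Omega>" "z \<noteq> x" using ne by blast
      have "\<Omega> - {y} \<noteq> {}" using ne[of y] by auto
      then obtain g where "g \<in> G" "g x \<in> {y}" using use[OF xy(1) z(1) z(2)[symmetric], of "{y}"] xy by auto
      thus ?thesis by auto
    qed
  qed
  show "primitive_on \<Omega> G" unfolding primitive_on_def
  proof (intro conjI allI impI trans)
    fix B assume B: "is_block \<Omega> G B"
    show "card B = 1 \<or> B = \<Omega>"
    proof (rule ccontr)
      assume nb: "\<not> ?thesis"
      have Bs: "B \<subseteq> \<Omega>" "B \<noteq> {}" using B unfolding is_block_def by auto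
      have finB: "finite B" using Bs assms(1) finite_subset by blast
      have "card B \<noteq> 0" using finB Bs by auto
      hence "card B \<ge> 2" using nb by auto
      then obtain x y where xy: "x \<in> B" "y \<in> B" "x \<noteq> y"
        by (metis One_nat_def card_le_Suc_iff numeral_2_eq_2 insertCI)
      have "\<Omega> - B \<noteq> {}" using Bs nb by auto
      then obtain g where g: "g \<in> G" "g x \<in> B" "g y \<in> \<Omega> - B"
        using use[of x y B] xy Bs by auto
      have "g x \<in> g ` B \<inter> B" using g xy by auto
      hence "g ` B \<inter> B \<noteq> {}" by blast
      hence "g ` B = B" using B g(1) unfolding is_block_def by blast
      thus False using g xy by auto
    qed
  qed
next
  assume pr: "primitive_on \<Omega> G"
  show "ordered_ut 2 \<Omega> G" unfolding ordered_ut_def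
  proof (intro allI impI)
    fix a :: "nat \<Rightarrow> 'a" and P :: "nat \<Rightarrow> 'a set" assume h: "a ` {..<2} \<subseteq> \<Omega> \<and> inj_on a {..<2} \<and> ordered_partition \<Omega> 2 P"
    have l2: "{..<2::nat} = {0,1}" by auto
    have a: "a 0 \<in> \<Omega>" "a 1 \<in> \<Omega>" "a 0 \<noteq> a 1" using h unfolding l2 by (auto dest: inj_onD)
    have p: "P 0 \<noteq> {}" "P 1 \<noteq> {}" "P 0 \<inter> P 1 = {}" "P 0 \<union> P 1 = \<Omega>"
      using h unfolding ordered_partition_def l2 by auto
    show "\<exists>g\<in>G. \<forall>i<2. g (a i) \<in> P i"
    proof (rule ccontr)
      assume nn: "\<not> ?thesis"
      have cl: "\<forall>g\<in>G. g (a 0) \<in> P 0 \<longrightarrow> g (a 1) \<in> P 0"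
      proof (intro ballI impI)
        fix g assume g: "g \<in> G" "g (a 0) \<in> P 0"
        have "g (a 1) \<in> \<Omega>" using assms(3) g(1) a(2) unfolding perm_group_on_def
          by (auto simp: permutes_in_image)
        moreover have "g (a 1) \<notin> P 1" using nn g by (auto simp: less_2_cases_iff)
        ultimately show "g (a 1) \<in> P 0" using p by auto
      qed
      show False
        by (rule core[OF assms(1,3) pr a, of "P 0"]) (use p cl in auto)
    qed
  qed
qed

end
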